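(* Let $A=A_s+A_d\epsilon\in\mathbb{DC}^{m\times n}$ and let $A=U\Sigma V^*$ be a singular value decomposition of $A$, where $U\in\mathbb{DC}^{m\times m}$ and $V\in\mathbb{DC}^{n\times n}$ are unitary dual complex matrices and $$\Sigma=\begin{bmatrix}\Sigma_{1s}&O\\O&O\end{bmatrix}+\begin{bmatrix}\Sigma_{1d}&O\\O&\Sigma_{2d}\end{bmatrix}\epsilon\in\mathbb{D}^{m\times n},$$ with $\Sigma_1=\Sigma_{1s}+\Sigma_{1d}\epsilon=\mathrm{diag}(\mu_1,\dots,\mu_r)$, $\mu_1\ge\dots\ge\mu_r$ positive appreciable dual real numbers, and $\Sigma_{2d}\epsilon=\mathrm{diag}(\mu_{r+1},\dots,\mu_t,0,\dots,0)$ with $\mu_{r+1}\ge\dots\ge\mu_t$ positive infinitesimal dual real numbers, $r\le t\le\min\{m,n\}$. Define $$\Sigma^G=\begin{bmatrix}\Sigma_1^{-1}&O\\O&O\end{bmatrix}=\begin{bmatrix}\Sigma_{1s}^{-1}&O\\O&O\end{bmatrix}-\begin{bmatrix}\Sigma_{1s}^{-2}\Sigma_{1d}&O\\O&O\end{bmatrix}\epsilon\in\mathbb{D}^{n\times m},\qquad A^G=V\Sigma^G U^*.$$ Then $X=A^G$ satisfies the four conditions (1e) $AXA=A_e$, (2) $XAX=X$, (3) $(AX)^*=AX$, (4) $(XA)^*=XA$, and it is the unique $X\in\mathbb{DC}^{n\times m}$ satisfying these four conditions. Moreover, if $A_d=O$ (i.e. $A$ is a complex matrix), then $A^G=A_s^+$,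 the Moore–Penrose inverse of $A_s$.
   Context: A dual number is $a=a_s+a_d\epsilon$ where $\epsilon\neq0$, $\epsilon^2=0$, and $\epsilon$ commutes with real/complex numbers; it is a dual real (resp. dual complex) number if $a_s,a_d$ are real (resp. complex). It is appreciable if $a_s\neq0$ and infinitesimal otherwise. Dual reals are totally ordered by: $a>b$ iff $a_s>b_s$, or $a_s=b_s$ and $a_d>b_d$. For appreciable $\mu$, $\mu^{-1}=\mu_s^{-1}-\mu_s^{-2}\mu_d\epsilon$. A dual complex matrix is $A=A_s+A_d\epsilon$ with $A_s,A_d$ complex matrices; $A^*=A_s^*+A_d^*\epsilon$; $U$ is unitary if $U^*U=UU^*=I$. Every $A\in\mathbb{DC}^{m\times n}$ has a singular value decomposition $A=U\Sigma V^*$ as in the statement, and the diagonal entries $\mu_1,\dots,\mu_t$ (with multiplicities) are unique. The essential part of $A$ is $A_e=U\begin{bmatrix}\Sigma_1&O\\O&O\end{bmatrix}V^*$ (with $\Sigma_1=\mathrm{diag}(\mu_1,\dots,\mu_r)$ the appreciable singular values); it is well-defined independent of the chosen SVD. A matrix $X$ satisfying (1e),(2),(3),(4) is called the genuine Moore–Penrose inverse (GMPI) of $A$, denoted $A^G$. *)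

theory Defs
  imports Complex_Main "Jordan_Normal_Form.Matrix"
begin

definition ctrans :: "complex mat \<Rightarrow> complex mat" where
  "ctrans A = mat (dim_col A) (dim_row A) (\<lambda>(i,j). cnj (A $$ (j,i)))"

(* A dual complex matrix A_s + A_d \<epsilon> is represented by the pair (A_s, A_d) *)
type_synonym dcmat = "complex mat \<times> complex mat"

definition dcarrier :: "nat \<Rightarrow> nat \<Rightarrow> dcmat set" where
  "dcarrier m n = {A. fst A \<in> carrier_mat m n \<and> snd A \<in> carrier_mat m n}"

(* (A_s + A_d e)(B_s + B_d e) = A_s B_s + (A_s B_d + A_d B_s) e, since e^2 = 0 *)
definition dmult :: "dcmat \<Rightarrow> dcmat \<Rightarrow> dcmat" (infixl "**\<^sub>d" 70) where
  "dmult A B = (fst A * fst B, fst A * snd B + snd A * fst B)"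

definition dstar :: "dcmat \<Rightarrow> dcmat" where
  "dstar A = (ctrans (fst A), ctrans (snd A))"

definition dunitary :: "nat \<Rightarrow> dcmat \<Rightarrow> bool" where
  "dunitary k U \<longleftrightarrow> U \<in> dcarrier k k \<and>
     dmult (dstar U) U = (1\<^sub>m k, 0\<^sub>m k k) \<and> dmult U (dstar U) = (1\<^sub>m k, 0\<^sub>m k k)"

(* Dual real numbers a_s + a_d e as pairs (a_s, a_d), with the total (lexicographic) order *)
type_synonym dreal = "real \<times> real"

definition dreal_le :: "dreal \<Rightarrow> dreal \<Rightarrow> bool" where
  "dreal_le a b \<longleftrightarrow> fst a < fst b \<or> (fst a = fst b \<and> snd a \<le> snd b)"

definition dreal_less :: "dreal \<Rightarrow> dreal \<Rightarrow> bool" where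
  "dreal_less a b \<longleftrightarrow> fst a < fst b \<or> (fst a = fst b \<and> snd a < snd b)"

definition dreal_inv :: "dreal \<Rightarrow> dreal" where
  "dreal_inv a = (1 / fst a, - snd a / (fst a)\<^sup>2)"

definition ddiag :: "nat \<Rightarrow> nat \<Rightarrow> (nat \<Rightarrow> dreal) \<Rightarrow> dcmat" where
  "ddiag m n d =
     (mat m n (\<lambda>(i,j). if i = j then complex_of_real (fst (d i)) else 0),
      mat m n (\<lambda>(i,j). if i = j then complex_of_real (snd (d i)) else 0))"

definition mp_inverse :: "complex mat \<Rightarrow> complex mat" where
  "mp_inverse A = (THE X. X \<in> carrier_mat (dim_col A) (dim_row A) \<and>
      A * X * A = A \<and> X * A * X = X \<and> ctrans (A * X) = A * X \<and> ctrans (X * A) = X * A)"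

end

theory Submission
  imports Defs
begin

lemma ctrans_carrier[simp]: "ctrans A \<in> carrier_mat (dim_col A) (dim_row A)"
  by (simp add: ctrans_def)
lemma ctrans_dims[simp]: "dim_row (ctrans A) = dim_col A" "dim_col (ctrans A) = dim_row A"
  by (simp_all add: ctrans_def)
lemma ctrans_index[simp]: "i < dim_col A \<Longrightarrow> j < dim_row A \<Longrightarrow> ctrans A $$ (i,j) = cnj (A $$ (j,i))"
  by (simp add: ctrans_def)
lemma ctrans_ctrans[simp]: "ctrans (ctrans A) = A"
  by (rule eq_matI) auto
lemma ctrans_zero[simp]: "ctrans (0\<^sub>m m n) = 0\<^sub>m n m"
  by (rule eq_matI) auto
lemma ctrans_one[simp]: "ctrans (1\<^sub>m n) = 1\<^sub>m n"
  by (rule eq_matI) auto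
lemma ctrans_add: "A \<in> carrier_mat m n \<Longrightarrow> B \<in> carrier_mat m n \<Longrightarrow> ctrans (A + B) = ctrans A + ctrans B"
  by (rule eq_matI) auto
lemma ctrans_mult: "A \<in> carrier_mat m k \<Longrightarrow> B \<in> carrier_mat k n \<Longrightarrow> ctrans (A * B) = ctrans B * ctrans A"
  by (rule eq_matI) (auto simp: scalar_prod_def cnj_sum intro!: sum.cong)

lemma dcarrierI: "fst A \<in> carrier_mat m n \<Longrightarrow> snd A \<in> carrier_mat m n \<Longrightarrow> A \<in> dcarrier m n"
  by (simp add: dcarrier_def)
lemma dcarrierD: "A \<in> dcarrier m n \<Longrightarrow> fst A \<in> carrier_mat m n"  "A \<in> dcarrier m n \<Longrightarrow> snd A \<in> carrier_mat m n"
  by (simp_all add: dcarrier_def)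

lemma dmult_carrier: "A \<in> dcarrier m k \<Longrightarrow> B \<in> dcarrier k n \<Longrightarrow> A **\<^sub>d B \<in> dcarrier m n"
  by (auto simp: dcarrier_def dmult_def)
lemma dstar_carrier: "A \<in> dcarrier m n \<Longrightarrow> dstar A \<in> dcarrier n m"
  by (auto simp: dcarrier_def dstar_def)

lemma dmult_assoc: assumes "A \<in> dcarrier a b" "B \<in> dcarrier b c" "C \<in> dcarrier c d"
  shows "A **\<^sub>d B **\<^sub>d C = A **\<^sub>d (B **\<^sub>d C)"
proof -
  obtain As Ad Bs Bd Cs Cd where e: "A = (As,Ad)" "B = (Bs,Bd)" "C = (Cs,Cd)" by (cases A, cases B, cases C) auto
  have c: "As \<in> carrier_mat a b" "Ad \<in> carrier_mat a b" "Bs \<in> carrier_mat b c" "Bd \<in> carrier_mat b c"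
     "Cs \<in> carrier_mat c d" "Cd \<in> carrier_mat c d" using assms e by (auto simp: dcarrier_def)
  have "As * Bs * Cd + (As * Bd + Ad * Bs) * Cs = As * (Bs * Cd + Bd * Cs) + Ad * (Bs * Cs)"
  proof -
    have 1: "(As * Bd + Ad * Bs) * Cs = As * Bd * Cs + Ad * Bs * Cs"
      using c by (rule_tac add_mult_distrib_mat) auto
    have 2: "As * (Bs * Cd + Bd * Cs) = As * (Bs * Cd) + As * (Bd * Cs)"
      using c by (rule_tac mult_add_distrib_mat) auto
    show ?thesis unfolding 1 2 using c
      by (simp add: assoc_add_mat[of _ a d])
  qed
  then show ?thesis using c e by (simp add: dmult_def)
qed

lemma dstar_mult: assumes "A \<in> dcarrier m k" "B \<in> dcarrier k n"
  shows "dstar (A **\<^sub>d B) = dstar B **\<^sub>d dstar A"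
  using assms by (auto simp: dcarrier_def dstar_def dmult_def ctrans_add[of _ m n] ctrans_mult[of _ m k]
      intro: comm_add_mat[of _ n m])

lemma dstar_dstar[simp]: "dstar (dstar A) = A" by (simp add: dstar_def)

lemma done_left: "A \<in> dcarrier m n \<Longrightarrow> (1\<^sub>m m, 0\<^sub>m m m) **\<^sub>d A = A"
  by (auto simp: dcarrier_def dmult_def)
lemma done_right: "A \<in> dcarrier m n \<Longrightarrow> A **\<^sub>d (1\<^sub>m n, 0\<^sub>m n n) = A"
  by (auto simp: dcarrier_def dmult_def)

lemma dunitaryD: assumes "dunitary k U"
  shows "U \<in> dcarrier k k" "dstar U **\<^sub>d U = (1\<^sub>m k, 0\<^sub>m k k)" "U **\<^sub>d dstar U = (1\<^sub>m k, 0\<^sub>m k k)"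
    "dstar U \<in> dcarrier k k"
  using assms dstar_carrier by (auto simp: dunitary_def)

lemma mid: assumes "A1 \<in> dcarrier a a'" "P \<in> dcarrier a' k" "dunitary k B" "Q \<in> dcarrier k c'" "C \<in> dcarrier c' c"
  shows "(A1 **\<^sub>d P **\<^sub>d dstar B) **\<^sub>d (B **\<^sub>d Q **\<^sub>d C) = A1 **\<^sub>d (P **\<^sub>d Q) **\<^sub>d C"
proof -
  note u = dunitaryD[OF assms(3)]
  note c = assms(1,2,4,5) u(1,4)
  have AP: "A1 **\<^sub>d P \<in> dcarrier a k" by (rule dmult_carrier[OF assms(1,2)])
  have QC: "Q **\<^sub>d C \<in> dcarrier k c" by (rule dmult_carrier[OF assms(4,5)])
  have BQC: "B **\<^sub>d Q **\<^sub>d C = B **\<^sub>d (Q **\<^sub>d C)" by (rule dmult_assoc[OF u(1) assms(4,5)])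
  have "(A1 **\<^sub>d P **\<^sub>d dstar B) **\<^sub>d (B **\<^sub>d Q **\<^sub>d C)
      = (A1 **\<^sub>d P) **\<^sub>d (dstar B **\<^sub>d (B **\<^sub>d (Q **\<^sub>d C)))"
    unfolding BQC using c AP QC dmult_carrier[OF u(1) QC] by (intro dmult_assoc) auto
  also have "dstar B **\<^sub>d (B **\<^sub>d (Q **\<^sub>d C)) = (dstar B **\<^sub>d B) **\<^sub>d (Q **\<^sub>d C)"
    using c QC by (intro dmult_assoc[symmetric]) auto
  also have "\<dots> = Q **\<^sub>d C" using u QC done_left by simp
  also have "(A1 **\<^sub>d P) **\<^sub>d (Q **\<^sub>d C) = A1 **\<^sub>d P **\<^sub>d Q **\<^sub>d C"
    using c AP by (intro dmult_assoc[symmetric]) auto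
  also have "A1 **\<^sub>d P **\<^sub>d Q = A1 **\<^sub>d (P **\<^sub>d Q)" using c by (intro dmult_assoc) auto
  finally show ?thesis .
qed

lemma unframe: assumes "dunitary m U" "dunitary n V" "P \<in> dcarrier m n"
  shows "dstar U **\<^sub>d (U **\<^sub>d P **\<^sub>d dstar V) **\<^sub>d V = P"
proof -
  note u = dunitaryD[OF assms(1)] and v = dunitaryD[OF assms(2)]
  have "dstar U **\<^sub>d (U **\<^sub>d P **\<^sub>d dstar V) = dstar U **\<^sub>d (U **\<^sub>d P) **\<^sub>d dstar V"
    using u v assms(3) dmult_carrier[OF u(1) assms(3)] by (intro dmult_assoc[symmetric]) auto
  also have "dstar U **\<^sub>d (U **\<^sub>d P) = P"
    using u v assms(3) dmult_assoc[of "dstar U" m m U m P n, symmetric] done_left by simp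
  finally have 1: "dstar U **\<^sub>d (U **\<^sub>d P **\<^sub>d dstar V) = P **\<^sub>d dstar V" .
  show ?thesis unfolding 1
    using u v assms(3) dmult_assoc[of P m n "dstar V" n V n] done_right by simp
qed

lemma cancel: assumes "dunitary m U" "dunitary n V" "P \<in> dcarrier m n" "Q \<in> dcarrier m n"
  and "U **\<^sub>d P **\<^sub>d dstar V = U **\<^sub>d Q **\<^sub>d dstar V"
  shows "P = Q"
  by (metis unframe[OF assms(1,2,3)] unframe[OF assms(1,2,4)] assms(5))

lemma reframe: assumes "dunitary m U" "dunitary n V" "X \<in> dcarrier n m"
  shows "V **\<^sub>d (dstar V **\<^sub>d X **\<^sub>d U) **\<^sub>d dstar U = X"
  using unframe[of n "dstar V" m "dstar U" X] assms
  by (simp add: dunitary_def dstar_carrier)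

lemma dstar_frame: assumes "U \<in> dcarrier m m" "P \<in> dcarrier m n" "V \<in> dcarrier n n"
  shows "dstar (U **\<^sub>d P **\<^sub>d dstar V) = V **\<^sub>d dstar P **\<^sub>d dstar U"
proof -
  have UP: "U **\<^sub>d P \<in> dcarrier m n" by (rule dmult_carrier[OF assms(1,2)])
  have "dstar (U **\<^sub>d P **\<^sub>d dstar V) = dstar (dstar V) **\<^sub>d dstar (U **\<^sub>d P)"
    using UP assms by (intro dstar_mult) (auto intro: dstar_carrier)
  also have "dstar (U **\<^sub>d P) = dstar P **\<^sub>d dstar U" using assms by (intro dstar_mult) auto
  also have "dstar (dstar V) **\<^sub>d (dstar P **\<^sub>d dstar U) = V **\<^sub>d dstar P **\<^sub>d dstar U"
    using assms dmult_assoc[of V n n "dstar P" m "dstar U" m, symmetric] by (simp add: dstar_carrier)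
  finally show ?thesis .
qed

definition dg :: "nat \<Rightarrow> nat \<Rightarrow> (nat \<Rightarrow> real) \<Rightarrow> complex mat" where
  "dg m n a = mat m n (\<lambda>(i,j). if i = j then complex_of_real (a i) else 0)"

lemma ddiag_dg: "ddiag m n \<mu> = (dg m n (\<lambda>i. fst (\<mu> i)), dg m n (\<lambda>i. snd (\<mu> i)))"
  by (simp add: ddiag_def dg_def)
lemma dg_carrier[simp]: "dg m n a \<in> carrier_mat m n" by (simp add: dg_def)
lemma dg_dims[simp]: "dim_row (dg m n a) = m" "dim_col (dg m n a) = n" by (simp_all add: dg_def)
lemma dg_index[simp]: "i < m \<Longrightarrow> j < n \<Longrightarrow> dg m n a $$ (i,j) = (if i = j then complex_of_real (a i) else 0)"
  by (simp add: dg_def)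
lemma dg_cong: "(\<And>i. i < m \<Longrightarrow> i < n \<Longrightarrow> a i = b i) \<Longrightarrow> dg m n a = dg m n b"
  by (rule eq_matI) auto
lemma dg_add: "dg m n a + dg m n b = dg m n (\<lambda>i. a i + b i)"
  by (rule eq_matI) auto
lemma dg_ctrans: "ctrans (dg m n a) = dg n m a"
  by (rule eq_matI) auto
lemma dg_left: assumes "M \<in> carrier_mat n k" "i < m" "j < k"
  shows "(dg m n a * M) $$ (i,j) = (if i < n then complex_of_real (a i) * M $$ (i,j) else 0)"
proof -
  have "(dg m n a * M) $$ (i,j) = (\<Sum>l\<in>{0..<n}. (if i = l then complex_of_real (a i) * M $$ (l,j) else 0))"
    using assms by (auto simp: scalar_prod_def if_distrib[of "\<lambda>x. x * _"] cong: if_cong)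
  then show ?thesis by (simp add: sum.delta)
qed
lemma dg_right: assumes "M \<in> carrier_mat m n" "i < m" "j < k"
  shows "(M * dg n k a) $$ (i,j) = (if j < n then M $$ (i,j) * complex_of_real (a j) else 0)"
proof -
  have "(M * dg n k a) $$ (i,j) = (\<Sum>l\<in>{0..<n}. (if l = j then M $$ (i,l) * complex_of_real (a j) else 0))"
    using assms by (auto simp: scalar_prod_def if_distrib[of "\<lambda>x. _ * x"] cong: if_cong)
  then show ?thesis by (simp add: sum.delta')
qed
lemma dg_mult: "dg m n a * dg n k b = dg m k (\<lambda>i. if i < n then a i * b i else 0)"
  by (rule eq_matI) (auto simp: dg_left[of _ n k] simp del: index_mult_mat(1) cong: if_cong)

lemma dg_left': "dim_row M = n \<Longrightarrow> i < m \<Longrightarrow> j < dim_col M \<Longrightarrow>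
   (dg m n a * M) $$ (i,j) = (if i < n then complex_of_real (a i) * M $$ (i,j) else 0)"
  by (rule dg_left) auto
lemma dg_right': "dim_col M = n \<Longrightarrow> i < dim_row M \<Longrightarrow> j < k \<Longrightarrow>
   (M * dg n k a) $$ (i,j) = (if j < n then M $$ (i,j) * complex_of_real (a j) else 0)"
  by (rule dg_right) auto

lemma frame_exist:
  fixes s e :: "nat \<Rightarrow> real"
  assumes rm: "r \<le> m" and rn: "r \<le> n" and sp: "\<forall>i<r. s i \<noteq> 0" and sz: "\<forall>i. r \<le> i \<longrightarrow> s i = 0"
  defines "S \<equiv> (dg m n s, dg m n e)"
    and "Se \<equiv> (dg m n s, dg m n (\<lambda>i. if i < r then e i else 0))"
    and "G \<equiv> (dg n m (\<lambda>i. if i < r then 1 / s i else 0), dg n m (\<lambda>i. if i < r then - e i / (s i)\<^sup>2 else 0))"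
  shows "S **\<^sub>d G **\<^sub>d S = Se" "G **\<^sub>d S **\<^sub>d G = G" "dstar (S **\<^sub>d G) = S **\<^sub>d G"
    "dstar (G **\<^sub>d S) = G **\<^sub>d S"
  using sp sz unfolding S_def Se_def G_def
  by (auto simp: dmult_def dstar_def dg_mult dg_add dg_ctrans intro!: dg_cong)
     (auto simp: field_simps power2_eq_square)

lemma frame_unique:
  fixes s e :: "nat \<Rightarrow> real"
  assumes rm: "r \<le> m" and rn: "r \<le> n" and sp: "\<forall>i<r. s i \<noteq> 0" and sz: "\<forall>i. r \<le> i \<longrightarrow> s i = 0"
  defines "S \<equiv> (dg m n s, dg m n e)"
    and "Se \<equiv> (dg m n s, dg m n (\<lambda>i. if i < r then e i else 0))"
    and "G \<equiv> (dg n m (\<lambda>i. if i < r then 1 / s i else 0), dg n m (\<lambda>i. if i < r then - e i / (s i)\<^sup>2 else 0))"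
  assumes W: "W \<in> dcarrier n m"
    and E1: "S **\<^sub>d W **\<^sub>d S = Se" and E2: "W **\<^sub>d S **\<^sub>d W = W"
    and E3: "dstar (S **\<^sub>d W) = S **\<^sub>d W" and E4: "dstar (W **\<^sub>d S) = W **\<^sub>d S"
  shows "W = G"
proof -
  obtain Ws Wd where Wp: "W = (Ws, Wd)" by (cases W) auto
  have wc: "Ws \<in> carrier_mat n m" "Wd \<in> carrier_mat n m" using W Wp by (auto simp: dcarrier_def)
  have wd[simp]: "dim_row Ws = n" "dim_col Ws = m" "dim_row Wd = n" "dim_col Wd = m" using wc by auto
  define Sm where "Sm = dg m n s"
  define Em where "Em = dg m n e"
  have e1s: "Sm * Ws * Sm = Sm" and e1d: "Sm * Ws * Em + (Sm * Wd + Em * Ws) * Sm = dg m n (\<lambda>i. if i < r then e i else 0)"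
    using E1 unfolding S_def Se_def Wp Sm_def Em_def by (simp_all add: dmult_def)
  have e2s: "Ws * Sm * Ws = Ws" and e2d: "Ws * Sm * Wd + (Ws * Em + Wd * Sm) * Ws = Wd"
    using E2 unfolding S_def Wp Sm_def Em_def by (simp_all add: dmult_def)
  have e3s: "ctrans (Sm * Ws) = Sm * Ws" and e3d: "ctrans (Sm * Wd + Em * Ws) = Sm * Wd + Em * Ws"
    using E3 unfolding S_def Wp Sm_def Em_def by (simp_all add: dmult_def dstar_def)
  have e4s: "ctrans (Ws * Sm) = Ws * Sm" and e4d: "ctrans (Ws * Em + Wd * Sm) = Ws * Em + Wd * Sm"
    using E4 unfolding S_def Wp Sm_def Em_def by (simp_all add: dmult_def dstar_def)
  have sm[simp]: "dim_row Sm = m" "dim_col Sm = n" "dim_row Em = m" "dim_col Em = n"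
    unfolding Sm_def Em_def by auto
  note ent = dg_left' dg_right'
  have szi: "s i = 0" if "r \<le> i" for i using sz that by auto
  have spi: "s i \<noteq> 0" if "i < r" for i using sp that by auto
  have F3: "Ws $$ (i,j) = 0" if "r \<le> i" "i < n" "j < r" for i j
  proof -
    have "ctrans (Ws * Sm) $$ (i,j) = (Ws * Sm) $$ (i,j)" using e4s by simp
    then have "Ws $$ (i,j) * complex_of_real (s j) = 0"
      using that rm rn unfolding Sm_def by (simp add: ent szi[OF that(1)] del: index_mult_mat(1) cong: if_cong)
    then show ?thesis using spi[OF that(3)] by simp
  qed
  have F2: "Ws $$ (i,j) = 0" if "i < r" "r \<le> j" "j < m" for i j
  proof -
    have "ctrans (Sm * Ws) $$ (i,j) = (Sm * Ws) $$ (i,j)" using e3s by simp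
    then have "complex_of_real (s i) * Ws $$ (i,j) = 0"
      using that rm rn unfolding Sm_def by (simp add: ent szi[OF that(2)] del: index_mult_mat(1) cong: if_cong)
    then show ?thesis using spi[OF that(1)] by simp
  qed
  have F1: "Ws $$ (i,j) = (if i = j then complex_of_real (1 / s i) else 0)" if "i < r" "j < r" for i j
  proof -
    have "(Sm * Ws * Sm) $$ (i,j) = Sm $$ (i,j)" using e1s by simp
    then have "complex_of_real (s i) * Ws $$ (i,j) * complex_of_real (s j) = (if i = j then complex_of_real (s i) else 0)"
      using that rm rn unfolding Sm_def by (simp add: ent del: index_mult_mat(1) cong: if_cong)
    moreover have "complex_of_real (s i) \<noteq> 0" "complex_of_real (s j) \<noteq> 0"
      using spi[OF that(1)] spi[OF that(2)] by auto
    ultimately show ?thesis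
      by (cases "i = j") (auto simp: field_simps)
  qed
  have F4: "Ws $$ (i,j) = 0" if "r \<le> i" "i < n" "r \<le> j" "j < m" for i j
  proof -
    have "(Ws * Sm * Ws) $$ (i,j) = Ws $$ (i,j)" using e2s by simp
    moreover have "row (Ws * Sm) i = 0\<^sub>v n"
    proof (rule eq_vecI)
      fix l assume l: "l < dim_vec (0\<^sub>v n :: complex vec)"
      then have "l < n" by simp
      then show "row (Ws * Sm) i $ l = 0\<^sub>v n $ l"
        using that F3[of i l] szi[of l] unfolding Sm_def
        by (cases "l < r") (auto simp add: ent simp del: index_mult_mat(1) cong: if_cong)
    qed simp
    moreover have "(Ws * Sm * Ws) $$ (i,j) = row (Ws * Sm) i \<bullet> col Ws j"
      using that by simp
    moreover have "col Ws j \<in> carrier_vec n" using col_dim[of Ws j] by simp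
    then have "0\<^sub>v n \<bullet> col Ws j = 0" by (rule scalar_prod_left_zero)
    ultimately show ?thesis by metis
  qed
  have ws: "Ws = dg n m (\<lambda>i. if i < r then 1 / s i else 0)"
  proof (rule eq_matI)
    fix i j assume ij: "i < dim_row (dg n m (\<lambda>i. if i < r then 1 / s i else 0))"
       "j < dim_col (dg n m (\<lambda>i. if i < r then 1 / s i else 0))"
    then have "i < n" "j < m" by auto
    then show "Ws $$ (i,j) = dg n m (\<lambda>i. if i < r then 1 / s i else 0) $$ (i,j)"
    proof (cases "i < r"; cases "j < r")
      assume "i < r" "j < r" then show ?thesis using F1[of i j] \<open>i < n\<close> \<open>j < m\<close> by simp
    next
      assume "i < r" "\<not> j < r" then show ?thesis using F2[of i j] \<open>i < n\<close> \<open>j < m\<close> by simp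
    next
      assume "\<not> i < r" "j < r" then show ?thesis using F3[of i j] \<open>i < n\<close> \<open>j < m\<close> by simp
    next
      assume "\<not> i < r" "\<not> j < r" then show ?thesis using F4[of i j] \<open>i < n\<close> \<open>j < m\<close> by simp
    qed
  qed auto
  define gf where "gf = (\<lambda>i. if i < r then 1 / s i else 0)"
  define hf where "hf = (\<lambda>i. if i < r then - e i / (s i)\<^sup>2 else 0)"
  have ws': "Ws = dg n m gf" using ws unfolding gf_def .
  have gz: "gf i = 0" if "r \<le> i" for i using that unfolding gf_def by auto
  have gs: "gf i = 1 / s i" if "i < r" for i using that unfolding gf_def by auto
  note e1d' = e1d[unfolded ws' Sm_def Em_def] and e2d' = e2d[unfolded ws' Sm_def Em_def]
  note e3d' = e3d[unfolded ws' Sm_def Em_def] and e4d' = e4d[unfolded ws' Sm_def Em_def]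
  note simps = ent dg_mult index_add_mat(1)
  have D1: "Wd $$ (i,j) = (if i = j then complex_of_real (hf i) else 0)" if "i < r" "j < r" for i j
  proof -
    have "(dg m n s * dg n m gf * dg m n e + (dg m n s * Wd + dg m n e * dg n m gf) * dg m n s) $$ (i,j)
      = dg m n (\<lambda>i. if i < r then e i else 0) $$ (i,j)" using e1d' by simp
    then have "complex_of_real (s i) * Wd $$ (i,j) * complex_of_real (s j)
         = (if i = j then - complex_of_real (e i) else 0)"
      using that rm rn gs[OF that(1)] spi[OF that(1)]
      by (simp add: simps algebra_simps add_eq_0_iff del: index_mult_mat(1) cong: if_cong split: if_splits)
    moreover have "complex_of_real (s i) \<noteq> 0" "complex_of_real (s j) \<noteq> 0"
      using spi[OF that(1)] spi[OF that(2)] by auto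
    ultimately show ?thesis using that unfolding hf_def
      by (cases "i = j") (auto simp: field_simps power2_eq_square)
  qed
  have D2: "Wd $$ (i,j) = 0" if "i < r" "r \<le> j" "j < m" for i j
  proof -
    have "ctrans (dg m n s * Wd + dg m n e * dg n m gf) $$ (i,j) = (dg m n s * Wd + dg m n e * dg n m gf) $$ (i,j)"
      using e3d' by simp
    then have "complex_of_real (s i) * Wd $$ (i,j) = 0"
      using that rm rn
      by (simp add: simps szi[OF that(2)] gz[OF that(2)] del: index_mult_mat(1) cong: if_cong split: if_splits)
    then show ?thesis using spi[OF that(1)] by simp
  qed
  have D3: "Wd $$ (i,j) = 0" if "r \<le> i" "i < n" "j < r" for i j
  proof -
    have "ctrans (dg n m gf * dg m n e + Wd * dg m n s) $$ (i,j) = (dg n m gf * dg m n e + Wd * dg m n s) $$ (i,j)"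
      using e4d' by simp
    then have "Wd $$ (i,j) * complex_of_real (s j) = 0"
      using that rm rn
      by (simp add: simps szi[OF that(1)] gz[OF that(1)] del: index_mult_mat(1) cong: if_cong split: if_splits)
    then show ?thesis using spi[OF that(3)] by simp
  qed
  have D4: "Wd $$ (i,j) = 0" if "r \<le> i" "i < n" "r \<le> j" "j < m" for i j
  proof -
    have "(dg n m gf * dg m n s * Wd + (dg n m gf * dg m n e + Wd * dg m n s) * dg n m gf) $$ (i,j) = Wd $$ (i,j)"
      using e2d' by simp
    then show ?thesis
      using that rm rn
      by (simp add: simps szi[OF that(1)] gz[OF that(1)] gz[OF that(3)] del: index_mult_mat(1) cong: if_cong split: if_splits)
  qed
  have wdd: "Wd = dg n m hf"
  proof (rule eq_matI)
    fix i j assume ij: "i < dim_row (dg n m hf)" "j < dim_col (dg n m hf)"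
    then have ij': "i < n" "j < m" by auto
    show "Wd $$ (i,j) = dg n m hf $$ (i,j)"
    proof (cases "i < r"; cases "j < r")
      assume "i < r" "j < r" then show ?thesis using D1[of i j] ij' by simp
    next
      assume "i < r" "\<not> j < r" then show ?thesis using D2[of i j] ij' by simp
    next
      assume "\<not> i < r" "j < r" then show ?thesis using D3[of i j] ij' by simp
    next
      assume "\<not> i < r" "\<not> j < r" then show ?thesis using D4[of i j] ij' by (simp add: hf_def)
    qed
  qed auto
  show ?thesis unfolding Wp G_def ws wdd hf_def by simp
qed

lemma prods:
  assumes U: "dunitary m U" and V: "dunitary n V" and S: "S \<in> dcarrier m n" and W: "W \<in> dcarrier n m"
  shows "(U **\<^sub>d S **\<^sub>d dstar V) **\<^sub>d (V **\<^sub>d W **\<^sub>d dstar U) = U **\<^sub>d (S **\<^sub>d W) **\<^sub>d dstar U"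
    "(V **\<^sub>d W **\<^sub>d dstar U) **\<^sub>d (U **\<^sub>d S **\<^sub>d dstar V) = V **\<^sub>d (W **\<^sub>d S) **\<^sub>d dstar V"
    "(U **\<^sub>d S **\<^sub>d dstar V) **\<^sub>d (V **\<^sub>d W **\<^sub>d dstar U) **\<^sub>d (U **\<^sub>d S **\<^sub>d dstar V)
      = U **\<^sub>d (S **\<^sub>d W **\<^sub>d S) **\<^sub>d dstar V"
    "(V **\<^sub>d W **\<^sub>d dstar U) **\<^sub>d (U **\<^sub>d S **\<^sub>d dstar V) **\<^sub>d (V **\<^sub>d W **\<^sub>d dstar U)
      = V **\<^sub>d (W **\<^sub>d S **\<^sub>d W) **\<^sub>d dstar U"
    "dstar ((U **\<^sub>d S **\<^sub>d dstar V) **\<^sub>d (V **\<^sub>d W **\<^sub>d dstar U)) = U **\<^sub>d dstar (S **\<^sub>d W) **\<^sub>d dstar U"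
    "dstar ((V **\<^sub>d W **\<^sub>d dstar U) **\<^sub>d (U **\<^sub>d S **\<^sub>d dstar V)) = V **\<^sub>d dstar (W **\<^sub>d S) **\<^sub>d dstar V"
proof -
  note u = dunitaryD[OF U] and v = dunitaryD[OF V]
  have SW: "S **\<^sub>d W \<in> dcarrier m m" by (rule dmult_carrier[OF S W])
  have WS: "W **\<^sub>d S \<in> dcarrier n n" by (rule dmult_carrier[OF W S])
  show 1: "(U **\<^sub>d S **\<^sub>d dstar V) **\<^sub>d (V **\<^sub>d W **\<^sub>d dstar U) = U **\<^sub>d (S **\<^sub>d W) **\<^sub>d dstar U"
    by (rule mid[OF u(1) S V W u(4)])
  show 2: "(V **\<^sub>d W **\<^sub>d dstar U) **\<^sub>d (U **\<^sub>d S **\<^sub>d dstar V) = V **\<^sub>d (W **\<^sub>d S) **\<^sub>d dstar V"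
    by (rule mid[OF v(1) W U S v(4)])
  show "(U **\<^sub>d S **\<^sub>d dstar V) **\<^sub>d (V **\<^sub>d W **\<^sub>d dstar U) **\<^sub>d (U **\<^sub>d S **\<^sub>d dstar V)
      = U **\<^sub>d (S **\<^sub>d W **\<^sub>d S) **\<^sub>d dstar V"
    unfolding 1 by (rule mid[OF u(1) SW U S v(4)])
  show "(V **\<^sub>d W **\<^sub>d dstar U) **\<^sub>d (U **\<^sub>d S **\<^sub>d dstar V) **\<^sub>d (V **\<^sub>d W **\<^sub>d dstar U)
      = V **\<^sub>d (W **\<^sub>d S **\<^sub>d W) **\<^sub>d dstar U"
    unfolding 2 by (rule mid[OF v(1) WS V W u(4)])
  show "dstar ((U **\<^sub>d S **\<^sub>d dstar V) **\<^sub>d (V **\<^sub>d W **\<^sub>d dstar U)) = U **\<^sub>d dstar (S **\<^sub>d W) **\<^sub>d dstar U"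
    unfolding 1 by (rule dstar_frame[OF u(1) SW u(1)])
  show "dstar ((V **\<^sub>d W **\<^sub>d dstar U) **\<^sub>d (U **\<^sub>d S **\<^sub>d dstar V)) = V **\<^sub>d dstar (W **\<^sub>d S) **\<^sub>d dstar V"
    unfolding 2 by (rule dstar_frame[OF v(1) WS v(1)])
qed

lemma transfer:
  assumes U: "dunitary m U" and V: "dunitary n V" and S: "S \<in> dcarrier m n" and Se: "Se \<in> dcarrier m n"
    and G: "G \<in> dcarrier n m"
    and f1: "S **\<^sub>d G **\<^sub>d S = Se" and f2: "G **\<^sub>d S **\<^sub>d G = G"
    and f3: "dstar (S **\<^sub>d G) = S **\<^sub>d G" and f4: "dstar (G **\<^sub>d S) = G **\<^sub>d S"
    and uq: "\<And>W. W \<in> dcarrier n m \<Longrightarrow> S **\<^sub>d W **\<^sub>d S = Se \<Longrightarrow> W **\<^sub>d S **\<^sub>d W = W \<Longrightarrow>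
       dstar (S **\<^sub>d W) = S **\<^sub>d W \<Longrightarrow> dstar (W **\<^sub>d S) = W **\<^sub>d S \<Longrightarrow> W = G"
    and A: "A = U **\<^sub>d S **\<^sub>d dstar V" and AG: "AG = V **\<^sub>d G **\<^sub>d dstar U"
    and Ae: "Ae = U **\<^sub>d Se **\<^sub>d dstar V"
  shows "AG \<in> dcarrier n m
      \<and> A **\<^sub>d AG **\<^sub>d A = Ae
      \<and> AG **\<^sub>d A **\<^sub>d AG = AG
      \<and> dstar (A **\<^sub>d AG) = A **\<^sub>d AG
      \<and> dstar (AG **\<^sub>d A) = AG **\<^sub>d A
      \<and> (\<forall>X \<in> dcarrier n m.
            A **\<^sub>d X **\<^sub>d A = Ae \<and> X **\<^sub>d A **\<^sub>d X = X
            \<and> dstar (A **\<^sub>d X) = A **\<^sub>d X \<and> dstar (X **\<^sub>d A) = X **\<^sub>d A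
            \<longrightarrow> X = AG)"
proof -
  note u = dunitaryD[OF U] and v = dunitaryD[OF V]
  note p = prods[OF U V S G]
  have "AG \<in> dcarrier n m" unfolding AG by (rule dmult_carrier[OF dmult_carrier[OF v(1) G] u(4)])
  moreover have "A **\<^sub>d AG **\<^sub>d A = Ae" unfolding A AG Ae p(3) f1 ..
  moreover have "AG **\<^sub>d A **\<^sub>d AG = AG" unfolding A AG p(4) f2 ..
  moreover have "dstar (A **\<^sub>d AG) = A **\<^sub>d AG" unfolding A AG by (metis p(5) f3 p(1))
  moreover have "dstar (AG **\<^sub>d A) = AG **\<^sub>d A" unfolding A AG by (metis p(6) f4 p(2))
  moreover have "X = AG" if X: "X \<in> dcarrier n m" and h: "A **\<^sub>d X **\<^sub>d A = Ae" "X **\<^sub>d A **\<^sub>d X = X"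
            "dstar (A **\<^sub>d X) = A **\<^sub>d X" "dstar (X **\<^sub>d A) = X **\<^sub>d A" for X
  proof -
    define W where "W = dstar V **\<^sub>d X **\<^sub>d U"
    have Wc: "W \<in> dcarrier n m" unfolding W_def by (rule dmult_carrier[OF dmult_carrier[OF v(4) X] u(1)])
    have XW: "X = V **\<^sub>d W **\<^sub>d dstar U" unfolding W_def using reframe[OF U V X] by simp
    note q = prods[OF U V S Wc]
    have SWS: "S **\<^sub>d W **\<^sub>d S \<in> dcarrier m n" by (rule dmult_carrier[OF dmult_carrier[OF S Wc] S])
    have WSW: "W **\<^sub>d S **\<^sub>d W \<in> dcarrier n m" by (rule dmult_carrier[OF dmult_carrier[OF Wc S] Wc])
    have SW: "S **\<^sub>d W \<in> dcarrier m m" by (rule dmult_carrier[OF S Wc])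
    have WS: "W **\<^sub>d S \<in> dcarrier n n" by (rule dmult_carrier[OF Wc S])
    have g1: "S **\<^sub>d W **\<^sub>d S = Se"
      using h(1) unfolding A XW Ae q(3) by (rule cancel[OF U V SWS Se])
    have g2: "W **\<^sub>d S **\<^sub>d W = W"
      using h(2) unfolding A XW q(4) by (rule cancel[OF V U WSW Wc])
    have g3: "dstar (S **\<^sub>d W) = S **\<^sub>d W"
      using h(3) unfolding A XW by (metis q(5) q(1) cancel[OF U U dstar_carrier[OF SW] SW])
    have g4: "dstar (W **\<^sub>d S) = W **\<^sub>d S"
      using h(4) unfolding A XW by (metis q(6) q(2) cancel[OF V V dstar_carrier[OF WS] WS])
    have "W = G" by (rule uq[OF Wc g1 g2 g3 g4])
    then show ?thesis unfolding XW AG by simp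
  qed
  ultimately show ?thesis by blast
qed

theorem theorem4p1:
  fixes m n r t :: nat and A U V :: dcmat and \<mu> :: "nat \<Rightarrow> dreal"
  assumes A: "A \<in> dcarrier m n"
    and U: "dunitary m U" and V: "dunitary n V"
    and rt: "r \<le> t" and tmn: "t \<le> min m n"
    and appr: "\<forall>i<r. fst (\<mu> i) > 0"
    and appr_ord: "\<forall>i j. i \<le> j \<and> j < r \<longrightarrow> dreal_le (\<mu> j) (\<mu> i)"
    and infi: "\<forall>i. r \<le> i \<and> i < t \<longrightarrow> fst (\<mu> i) = 0 \<and> snd (\<mu> i) > 0"
    and infi_ord: "\<forall>i j. r \<le> i \<and> i \<le> j \<and> j < t \<longrightarrow> dreal_le (\<mu> j) (\<mu> i)"
    and svd: "A = U **\<^sub>d ddiag m n (\<lambda>i. if i < t then \<mu> i else (0,0)) **\<^sub>d dstar V"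
  defines "AG \<equiv> V **\<^sub>d ddiag n m (\<lambda>i. if i < r then dreal_inv (\<mu> i) else (0,0)) **\<^sub>d dstar U"
    and "Ae \<equiv> U **\<^sub>d ddiag m n (\<lambda>i. if i < r then \<mu> i else (0,0)) **\<^sub>d dstar V"
  shows "AG \<in> dcarrier n m
      \<and> A **\<^sub>d AG **\<^sub>d A = Ae
      \<and> AG **\<^sub>d A **\<^sub>d AG = AG
      \<and> dstar (A **\<^sub>d AG) = A **\<^sub>d AG
      \<and> dstar (AG **\<^sub>d A) = AG **\<^sub>d A
      \<and> (\<forall>X \<in> dcarrier n m.
            A **\<^sub>d X **\<^sub>d A = Ae \<and> X **\<^sub>d A **\<^sub>d X = X
            \<and> dstar (A **\<^sub>d X) = A **\<^sub>d X \<and> dstar (X **\<^sub>d A) = X **\<^sub>d A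
            \<longrightarrow> X = AG)
      \<and> (snd A = 0\<^sub>m m n \<longrightarrow> AG = (mp_inverse (fst A), 0\<^sub>m n m))"
proof -
  have rm: "r \<le> m" and rn: "r \<le> n" using rt tmn by auto
  define s where "s = (\<lambda>i. if i < r then fst (\<mu> i) else 0)"
  define e where "e = (\<lambda>i. if i < t then snd (\<mu> i) else 0)"
  have sp: "\<forall>i<r. s i \<noteq> 0" using appr unfolding s_def by auto
  have sz: "\<forall>i. r \<le> i \<longrightarrow> s i = 0" unfolding s_def by auto
  have Sig: "ddiag m n (\<lambda>i. if i < t then \<mu> i else (0,0)) = (dg m n s, dg m n e)"
    unfolding ddiag_dg using infi rt by (auto simp: s_def e_def intro!: dg_cong)
  have Sige: "ddiag m n (\<lambda>i. if i < r then \<mu> i else (0,0)) = (dg m n s, dg m n (\<lambda>i. if i < r then e i else 0))"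
    unfolding ddiag_dg using rt by (auto simp: s_def e_def intro!: dg_cong)
  have SigG: "ddiag n m (\<lambda>i. if i < r then dreal_inv (\<mu> i) else (0,0)) =
     (dg n m (\<lambda>i. if i < r then 1 / s i else 0), dg n m (\<lambda>i. if i < r then - e i / (s i)\<^sup>2 else 0))"
    unfolding ddiag_dg using rt by (auto simp: s_def e_def dreal_inv_def intro!: dg_cong)
  note fe = frame_exist[OF rm rn sp sz, of e]
  note fu = frame_unique[OF rm rn sp sz, of _ e]
  have main: "AG \<in> dcarrier n m
      \<and> A **\<^sub>d AG **\<^sub>d A = Ae
      \<and> AG **\<^sub>d A **\<^sub>d AG = AG
      \<and> dstar (A **\<^sub>d AG) = A **\<^sub>d AG
      \<and> dstar (AG **\<^sub>d A) = AG **\<^sub>d A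
      \<and> (\<forall>X \<in> dcarrier n m.
            A **\<^sub>d X **\<^sub>d A = Ae \<and> X **\<^sub>d A **\<^sub>d X = X
            \<and> dstar (A **\<^sub>d X) = A **\<^sub>d X \<and> dstar (X **\<^sub>d A) = X **\<^sub>d A
            \<longrightarrow> X = AG)"
    by (rule transfer[OF U V _ _ _ fe(1) fe(2) fe(3) fe(4) fu])
       (auto simp: dcarrier_def svd AG_def Ae_def Sig Sige SigG)
  moreover have "snd A = 0\<^sub>m m n \<longrightarrow> AG = (mp_inverse (fst A), 0\<^sub>m n m)"
  proof
    assume Ad: "snd A = 0\<^sub>m m n"
    obtain Us Ud where Up: "U = (Us, Ud)" by (cases U) auto
    obtain Vs Vd where Vp: "V = (Vs, Vd)" by (cases V) auto
    have uc[simp]: "Us \<in> carrier_mat m m" "Ud \<in> carrier_mat m m"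
      using dunitaryD(1)[OF U] Up by (auto simp: dcarrier_def)
    have vc[simp]: "Vs \<in> carrier_mat n n" "Vd \<in> carrier_mat n n"
      using dunitaryD(1)[OF V] Vp by (auto simp: dcarrier_def)
    have Uun: "ctrans Us * Us = 1\<^sub>m m" using dunitaryD(2)[OF U] Up by (simp add: dmult_def dstar_def)
    have Vun: "ctrans Vs * Vs = 1\<^sub>m n" using dunitaryD(2)[OF V] Vp by (simp add: dmult_def dstar_def)
    define Sm where "Sm = dg m n s"
    have smc[simp]: "Sm \<in> carrier_mat m n" unfolding Sm_def by simp
    have ctc: "ctrans Us \<in> carrier_mat m m" "ctrans Ud \<in> carrier_mat m m" "ctrans Vs \<in> carrier_mat n n"
      using ctrans_carrier[of Us] ctrans_carrier[of Ud] ctrans_carrier[of Vs] uc vc by auto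
    have Ac: "fst A \<in> carrier_mat m n" using A by (simp add: dcarrier_def)
    have As: "fst A = Us * Sm * ctrans Vs" using svd unfolding Sig Up Vp Sm_def by (simp add: dmult_def dstar_def)
    have Sc: "(dg m n s, dg m n e) \<in> dcarrier m n" by (simp add: dcarrier_def)
    have bk: "dstar U **\<^sub>d A **\<^sub>d V = (dg m n s, dg m n e)"
      unfolding svd Sig by (rule unframe[OF U V Sc])
    have eq0: "ctrans Us * fst A * Vd + (ctrans Us * snd A + ctrans Ud * fst A) * Vs = dg m n e"
      using bk unfolding Up Vp by (simp add: dmult_def dstar_def)
    have z: "ctrans Us * snd A = 0\<^sub>m m n" unfolding Ad by (rule right_mult_zero_mat) (use ctrans_carrier[of Us] uc(1) in auto)
    have h1: "ctrans Us * fst A = Sm * ctrans Vs"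
    proof -
      have "ctrans Us * fst A = (ctrans Us * Us) * (Sm * ctrans Vs)" unfolding As
        by (simp only: assoc_mult_mat[OF uc(1) smc ctc(3)] assoc_mult_mat[OF ctc(1) uc(1) mult_carrier_mat[OF smc ctc(3)]])
      then show ?thesis using Uun left_mult_one_mat[OF mult_carrier_mat[OF smc ctc(3)]] by simp
    qed
    have h2: "fst A * Vs = Us * Sm"
    proof -
      have "fst A * Vs = (Us * Sm) * (ctrans Vs * Vs)" unfolding As
        by (rule assoc_mult_mat[OF mult_carrier_mat[OF uc(1) smc] ctc(3) vc(1)])
      then show ?thesis using Vun right_mult_one_mat[OF mult_carrier_mat[OF uc(1) smc]] by simp
    qed
    have eq1: "Sm * (ctrans Vs * Vd) + (ctrans Ud * Us) * Sm = dg m n e"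
    proof -
      have "ctrans Us * fst A * Vd = Sm * (ctrans Vs * Vd)" unfolding h1
        by (rule assoc_mult_mat[OF smc ctc(3) vc(2)])
      moreover have "(ctrans Us * snd A + ctrans Ud * fst A) * Vs = (ctrans Ud * Us) * Sm"
      proof -
        have "ctrans Us * snd A + ctrans Ud * fst A = ctrans Ud * fst A" unfolding z by (rule left_add_zero_mat[OF mult_carrier_mat[OF ctc(2) Ac]])
        moreover have "ctrans Ud * fst A * Vs = ctrans Ud * (fst A * Vs)"
          by (rule assoc_mult_mat[OF ctc(2) Ac vc(1)])
        ultimately show ?thesis unfolding h2 using assoc_mult_mat[OF ctc(2) uc(1) smc] by simp
      qed
      ultimately show ?thesis using eq0 by simp
    qed
    have not: "\<not> (r \<le> i \<and> i < t)" for i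
    proof
      assume i: "r \<le> i \<and> i < t"
      then have im: "i < m" "i < n" using tmn by auto
      have "(Sm * (ctrans Vs * Vd) + (ctrans Ud * Us) * Sm) $$ (i,i) = dg m n e $$ (i,i)" using eq1 by simp
      then have "complex_of_real (e i) = 0"
        using im i unfolding Sm_def
        by (simp add: dg_left' dg_right' sz carrier_matD[OF uc(1)] carrier_matD[OF uc(2)]
            carrier_matD[OF vc(1)] carrier_matD[OF vc(2)] del: index_mult_mat(1) cong: if_cong)
      moreover have "e i > 0" using infi i unfolding e_def by auto
      ultimately show False by simp
    qed
    have AeA: "Ae = A"
    proof -
      have "(\<lambda>i. if i < r then e i else 0) = e" using not unfolding e_def by (auto simp: fun_eq_iff)
      then show ?thesis unfolding Ae_def svd Sige Sig by simp
    qed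
    define Gs where "Gs = fst AG"
    obtain As0 where Aeq: "A = (As0, 0\<^sub>m m n)" using Ad by (cases A) auto
    have key: "(Y, 0\<^sub>m n m) = AG" if Y: "Y \<in> carrier_mat n m" and p: "fst A * Y * fst A = fst A" "Y * fst A * Y = Y"
       "ctrans (fst A * Y) = fst A * Y" "ctrans (Y * fst A) = Y * fst A" for Y
    proof -
      have "(Y, 0\<^sub>m n m) \<in> dcarrier n m" using Y by (simp add: dcarrier_def)
      moreover have "A **\<^sub>d (Y, 0\<^sub>m n m) **\<^sub>d A = Ae"
        unfolding AeA using Aeq Y Ac p by (simp add: dmult_def)
      moreover have "(Y, 0\<^sub>m n m) **\<^sub>d A **\<^sub>d (Y, 0\<^sub>m n m) = (Y, 0\<^sub>m n m)"
        using Aeq Y Ac p by (simp add: dmult_def)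
      moreover have "dstar (A **\<^sub>d (Y, 0\<^sub>m n m)) = A **\<^sub>d (Y, 0\<^sub>m n m)"
        using Aeq Y Ac p by (simp add: dmult_def dstar_def)
      moreover have "dstar ((Y, 0\<^sub>m n m) **\<^sub>d A) = (Y, 0\<^sub>m n m) **\<^sub>d A"
        using Aeq Y Ac p by (simp add: dmult_def dstar_def)
      ultimately show ?thesis using main by blast
    qed
    have Gc: "Gs \<in> carrier_mat n m" using main unfolding Gs_def by (simp add: dcarrier_def)
    have Gp: "fst A * Gs * fst A = fst A" "Gs * fst A * Gs = Gs"
       "ctrans (fst A * Gs) = fst A * Gs" "ctrans (Gs * fst A) = Gs * fst A"
    proof -
      have "fst (A **\<^sub>d AG **\<^sub>d A) = fst Ae" using main by simp
      then show "fst A * Gs * fst A = fst A" unfolding AeA Gs_def by (simp add: dmult_def)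
      have "fst (AG **\<^sub>d A **\<^sub>d AG) = fst AG" using main by simp
      then show "Gs * fst A * Gs = Gs" unfolding Gs_def by (simp add: dmult_def)
      have "fst (dstar (A **\<^sub>d AG)) = fst (A **\<^sub>d AG)" using main by simp
      then show "ctrans (fst A * Gs) = fst A * Gs" unfolding Gs_def by (simp add: dmult_def dstar_def)
      have "fst (dstar (AG **\<^sub>d A)) = fst (AG **\<^sub>d A)" using main by simp
      then show "ctrans (Gs * fst A) = Gs * fst A" unfolding Gs_def by (simp add: dmult_def dstar_def)
    qed
    have AGe: "AG = (Gs, 0\<^sub>m n m)" using key[OF Gc Gp] by simp
    have "mp_inverse (fst A) = Gs"
      unfolding mp_inverse_def
    proof (rule the_equality)
      show "Gs \<in> carrier_mat (dim_col (fst A)) (dim_row (fst A)) \<and>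
        fst A * Gs * fst A = fst A \<and> Gs * fst A * Gs = Gs \<and> ctrans (fst A * Gs) = fst A * Gs \<and> ctrans (Gs * fst A) = Gs * fst A"
        using Gc Gp Ac by auto
    next
      fix Y assume "Y \<in> carrier_mat (dim_col (fst A)) (dim_row (fst A)) \<and>
        fst A * Y * fst A = fst A \<and> Y * fst A * Y = Y \<and> ctrans (fst A * Y) = fst A * Y \<and> ctrans (Y * fst A) = Y * fst A"
      then have "(Y, 0\<^sub>m n m) = AG" using Ac by (intro key) auto
      then show "Y = Gs" using AGe by simp
    qed
    then show "AG = (mp_inverse (fst A), 0\<^sub>m n m)" using AGe by simp
  qed
  ultimately show ?thesis by blast
qed

end
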